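(* Let $\lambda_\operatorname{loc} \geq 0$ be a constant and $X$ be a $(s,k,K)$-two layer system such that all the links are $\lambda_\operatorname{loc}$-expanders. Also, let $A \subseteq E$ be a non-empty set, $0< \mu <1$ be a constant and $U \subseteq V_{\mu \text{-small}}$ be a set. Then $$(s-1) \left(\lambda_\operatorname{loc} + \mu \right) \sum_{i=1}^k i w (A_U^i) \geq \sum_{v \in U} m_v (A_v,A_v).$$
   Context: A $(s,k,K)$-two layer system is $X=(V,E,T)$ where $V$ is a finite set, $E \subseteq 2^V$ with $|\tau|=k$ for all $\tau\in E$ and $\bigcup_{\tau\in E}\tau = V$, $T\subseteq 2^E$ with $|\sigma|=K$ for all $\sigma\in T$ and $\bigcup_{\sigma\in T}\sigma=E$; writing $v\in\sigma$ if $v\in\tau$ for some $\tau\in\sigma$, one has $2\le |\{\tau\in\sigma : v\in\tau\}|\le s$ for every $\sigma\in T$ and $v\in\sigma$. A positive weight $w:T\to\mathbb{R}_+$ is fixed and extended by $w(\tau)=\sum_{\sigma\in T,\tau\in\sigma} w(\sigma)$ for $\tau\in E$, and $w(A)=\sum_{\eta\in A} w(\eta)$ for sets $A$. For $v\in V$, the link $X_v$ is the weighted graph with vertex set $E_v=\{\tau\in E: v\in\tau\}$, edges $\{\tau_1,\tau_2\}$ with $\tau_1\neq\tau_2$ in $E_v$ and some $\sigma\in T$ containing both, and edge weight $m_v(\{\tau_1,\tau_2\})=\sum_{\sigma\in T,\tau_1,\tau_2\in\sigma} w(\sigma)$; for a vertex $\tau$, $m_v(\tau)$ is the sum of the weights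 of the edges containing $\tau$, $m_v(B)=\sum_{\tau\in B} m_v(\tau)$, and $m_v(B_1,B_2)=\sum_{(\tau_1,\tau_2)\in B_1\times B_2,\ \{\tau_1,\tau_2\}\text{ an edge}} m_v(\{\tau_1,\tau_2\})$. For $A\subseteq E$, $A_v = A\cap E_v$, and for $U\subseteq V$, $A_U^i=\{\tau\in A : |U\cap\tau| = i\}$. A vertex $v$ is $\mu$-small with respect to $A$ if $m_v(A_v)/m_v(E_v)<\mu$, and $V_{\mu\text{-small}}$ is the set of such vertices. A weighted graph $G$ with vertex set $W$ and weight $m$ is a $\lambda$-expander if $1-h_G\le\lambda$, where $h_G=\min_{\emptyset\neq U'\subsetneqq W} \frac{m(U',W\setminus U')\,m(W)}{m(U')\,m(W\setminus U')}$. *)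

theory Defs
  imports Complex_Main
begin

(* vertices of type 'a; E :: 'a set set (faces); T :: 'a set set set (top faces) *)

definition vin :: "'a \<Rightarrow> 'a set set \<Rightarrow> bool" where
  "vin v \<sigma> \<longleftrightarrow> (\<exists>\<tau>\<in>\<sigma>. v \<in> \<tau>)"

definition two_layer_system ::
  "nat \<Rightarrow> nat \<Rightarrow> nat \<Rightarrow> 'a set \<Rightarrow> 'a set set \<Rightarrow> 'a set set set \<Rightarrow> bool" where
  "two_layer_system s k K V E T \<longleftrightarrow>
     finite V \<and>
     E \<subseteq> Pow V \<and> (\<forall>\<tau>\<in>E. card \<tau> = k) \<and> \<Union>E = V \<and>
     T \<subseteq> Pow E \<and> (\<forall>\<sigma>\<in>T. card \<sigma> = K) \<and> \<Union>T = E \<and>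
     (\<forall>\<sigma>\<in>T. \<forall>v. vin v \<sigma> \<longrightarrow>
         2 \<le> card {\<tau>\<in>\<sigma>. v \<in> \<tau>} \<and> card {\<tau>\<in>\<sigma>. v \<in> \<tau>} \<le> s)"

definition wE :: "'a set set set \<Rightarrow> ('a set set \<Rightarrow> real) \<Rightarrow> 'a set \<Rightarrow> real" where
  "wE T w \<tau> = (\<Sum>\<sigma>\<in>{\<sigma>\<in>T. \<tau> \<in> \<sigma>}. w \<sigma>)"

definition wEset :: "'a set set set \<Rightarrow> ('a set set \<Rightarrow> real) \<Rightarrow> 'a set set \<Rightarrow> real" where
  "wEset T w A = (\<Sum>\<tau>\<in>A. wE T w \<tau>)"

definition Ev :: "'a set set \<Rightarrow> 'a \<Rightarrow> 'a set set" where
  "Ev E v = {\<tau>\<in>E. v \<in> \<tau>}"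

definition Alayer :: "'a set set \<Rightarrow> 'a set \<Rightarrow> nat \<Rightarrow> 'a set set" where
  "Alayer A U i = {\<tau>\<in>A. card (U \<inter> \<tau>) = i}"

definition link_adj :: "'a set set \<Rightarrow> 'a set set set \<Rightarrow> 'a \<Rightarrow> 'a set \<Rightarrow> 'a set \<Rightarrow> bool" where
  "link_adj E T v \<tau>1 \<tau>2 \<longleftrightarrow> \<tau>1 \<in> Ev E v \<and> \<tau>2 \<in> Ev E v \<and> \<tau>1 \<noteq> \<tau>2 \<and>
      (\<exists>\<sigma>\<in>T. \<tau>1 \<in> \<sigma> \<and> \<tau>2 \<in> \<sigma>)"

definition link_edge_w :: "'a set set set \<Rightarrow> ('a set set \<Rightarrow> real) \<Rightarrow> 'a set \<Rightarrow> 'a set \<Rightarrow> real" where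
  "link_edge_w T w \<tau>1 \<tau>2 = (\<Sum>\<sigma>\<in>{\<sigma>\<in>T. \<tau>1 \<in> \<sigma> \<and> \<tau>2 \<in> \<sigma>}. w \<sigma>)"

definition link_m :: "'a set set \<Rightarrow> 'a set set set \<Rightarrow> ('a set set \<Rightarrow> real) \<Rightarrow> 'a \<Rightarrow> 'a set \<Rightarrow> real" where
  "link_m E T w v \<tau> = (\<Sum>\<tau>'\<in>{\<tau>'\<in>Ev E v. link_adj E T v \<tau> \<tau>'}. link_edge_w T w \<tau> \<tau>')"

definition link_mset :: "'a set set \<Rightarrow> 'a set set set \<Rightarrow> ('a set set \<Rightarrow> real) \<Rightarrow> 'a \<Rightarrow> 'a set set \<Rightarrow> real" where
  "link_mset E T w v B = (\<Sum>\<tau>\<in>B. link_m E T w v \<tau>)"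

definition link_mpair :: "'a set set \<Rightarrow> 'a set set set \<Rightarrow> ('a set set \<Rightarrow> real) \<Rightarrow> 'a \<Rightarrow>
    'a set set \<Rightarrow> 'a set set \<Rightarrow> real" where
  "link_mpair E T w v B1 B2 =
     (\<Sum>p\<in>{p\<in>B1 \<times> B2. link_adj E T v (fst p) (snd p)}. link_edge_w T w (fst p) (snd p))"

definition link_h :: "'a set set \<Rightarrow> 'a set set set \<Rightarrow> ('a set set \<Rightarrow> real) \<Rightarrow> 'a \<Rightarrow> real" where
  "link_h E T w v = Min ((\<lambda>U'. link_mpair E T w v U' (Ev E v - U') * link_mset E T w v (Ev E v)
        / (link_mset E T w v U' * link_mset E T w v (Ev E v - U')))
      ` {U'. U' \<noteq> {} \<and> U' \<subset> Ev E v})"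

definition link_expander :: "'a set set \<Rightarrow> 'a set set set \<Rightarrow> ('a set set \<Rightarrow> real) \<Rightarrow> 'a \<Rightarrow> real \<Rightarrow> bool" where
  "link_expander E T w v lam \<longleftrightarrow> 1 - link_h E T w v \<le> lam"

definition small_vertices :: "'a set \<Rightarrow> 'a set set \<Rightarrow> 'a set set set \<Rightarrow> ('a set set \<Rightarrow> real) \<Rightarrow>
    real \<Rightarrow> 'a set set \<Rightarrow> 'a set" where
  "small_vertices V E T w \<mu> A =
     {v\<in>V. link_mset E T w v (A \<inter> Ev E v) / link_mset E T w v (Ev E v) < \<mu>}"

end

theory Submission
  imports Defs
begin

lemma key_real:
  fixes mA mB mAA mAB q lam \<mu> :: real
  assumes "mA \<ge> 0" "mB \<ge> 0" "mAA \<ge> 0" "mAB \<ge> 0" "mAA + mAB = mA"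
    and "mA / (mA + mB) < \<mu>" and "1 - q \<le> lam"
    and "q = mAB * (mA + mB) / (mA * mB)" and "lam \<ge> 0" "\<mu> > 0"
  shows "mAA \<le> (lam + \<mu>) * mA"
proof (cases "mA = 0")
  case True then show ?thesis using assms by simp
next
  case nA: False
  show ?thesis
  proof (cases "mB = 0")
    case True
    then have "lam \<ge> 1" using assms by simp
    then have "mA \<le> lam * mA" using assms by (simp add: mult_le_cancel_right1)
    moreover have "0 \<le> \<mu> * mA" using assms by simp
    ultimately have "mAA \<le> lam * mA + \<mu> * mA" using assms(4,5) by linarith
    then show ?thesis by (simp add: distrib_right)
  next
    case nB: False
    have pA: "mA > 0" using nA assms by simp
    have pB: "mB > 0" using nB assms by simp
    define M where "M = mA + mB"
    have pM: "M > 0" using pA pB M_def by simp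
    define t where "t = mA / M"
    have t01: "0 \<le> t" "t \<le> 1" "t < \<mu>" using pA pB pM assms unfolding t_def M_def by auto
    have q0: "q \<ge> 0" using assms by simp
    have "1 - t = mB / M" using pM unfolding t_def M_def by (simp add: field_simps)
    hence mAB: "mAB = q * mA * (1 - t)"
      using pA pB pM assms(8) unfolding M_def by simp
    have mAA: "mAA = mA * (1 - q * (1 - t))" using mAB assms(5) by (simp add: algebra_simps)
    have "1 - q * (1 - t) \<le> lam + \<mu>"
    proof (cases "q \<ge> 1")
      case True
      have "1 - t \<le> q * (1 - t)" using mult_right_mono[of 1 q "1-t"] True t01 by simp
      then show ?thesis using t01 assms(9) by linarith
    next
      case False
      have "q * t \<le> t" using mult_right_mono[of q 1 t] False t01 by simp
      then show ?thesis using t01 assms(7) by (simp add: algebra_simps)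
    qed
    then show ?thesis using mAA pA by (simp add: mult.commute mult_left_mono)
  qed
qed

lemma edge_w_nonneg: "\<forall>\<sigma>\<in>T. w \<sigma> > 0 \<Longrightarrow> link_edge_w T w a b \<ge> 0"
  unfolding link_edge_w_def by (rule sum_nonneg) auto

lemma mpair_nonneg: "\<forall>\<sigma>\<in>T. w \<sigma> > 0 \<Longrightarrow> link_mpair E T w v B1 B2 \<ge> 0"
  unfolding link_mpair_def by (rule sum_nonneg) (simp add: edge_w_nonneg)

lemma m_nonneg: "\<forall>\<sigma>\<in>T. w \<sigma> > 0 \<Longrightarrow> link_m E T w v t \<ge> 0"
  unfolding link_m_def by (rule sum_nonneg) (simp add: edge_w_nonneg)

lemma mset_nonneg: "\<forall>\<sigma>\<in>T. w \<sigma> > 0 \<Longrightarrow> link_mset E T w v B \<ge> 0"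
  unfolding link_mset_def by (rule sum_nonneg) (simp add: m_nonneg)

lemma mpair_split:
  assumes "finite B1" "finite B2"
  shows "link_mpair E T w v B1 B2 =
    (\<Sum>\<tau>\<in>B1. \<Sum>\<tau>'\<in>{\<tau>'\<in>B2. link_adj E T v \<tau> \<tau>'}. link_edge_w T w \<tau> \<tau>')"
proof -
  have "{p\<in>B1 \<times> B2. link_adj E T v (fst p) (snd p)} = Sigma B1 (\<lambda>\<tau>. {\<tau>'\<in>B2. link_adj E T v \<tau> \<tau>'})"
    by auto
  then show ?thesis unfolding link_mpair_def
    using sum.Sigma[of B1 "\<lambda>\<tau>. {\<tau>'\<in>B2. link_adj E T v \<tau> \<tau>'}" "link_edge_w T w"] assms
    by (simp add: split_def)
qed

lemma m_split:
  assumes "B \<subseteq> Ev E v" "finite (Ev E v)"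
  shows "link_mpair E T w v B B + link_mpair E T w v B (Ev E v - B) = link_mset E T w v B"
proof -
  have fB: "finite B" using assms finite_subset by blast
  have "\<And>\<tau>. (\<Sum>\<tau>'\<in>{\<tau>'\<in>B. link_adj E T v \<tau> \<tau>'}. link_edge_w T w \<tau> \<tau>') +
      (\<Sum>\<tau>'\<in>{\<tau>'\<in>Ev E v - B. link_adj E T v \<tau> \<tau>'}. link_edge_w T w \<tau> \<tau>') = link_m E T w v \<tau>"
  proof -
    fix \<tau>
    have e: "{\<tau>'\<in>Ev E v. link_adj E T v \<tau> \<tau>'} = {\<tau>'\<in>B. link_adj E T v \<tau> \<tau>'} \<union> {\<tau>'\<in>Ev E v - B. link_adj E T v \<tau> \<tau>'}"
      using assms(1) by auto
    show "?thesis \<tau>" unfolding link_m_def e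
      by (rule sum.union_disjoint[symmetric]) (use fB assms(2) in auto)
  qed
  then show ?thesis
    using fB assms(2) by (simp add: mpair_split link_mset_def sum.distrib[symmetric])
qed

lemma tls_finite:
  assumes "two_layer_system s k K V E T"
  shows "finite V" "finite E" "finite T" "\<And>v. finite (Ev E v)"
proof -
  show fV: "finite V" using assms unfolding two_layer_system_def by simp
  show fE: "finite E" using assms fV unfolding two_layer_system_def
    by (meson finite_Pow_iff finite_subset)
  show "finite T" using assms fE unfolding two_layer_system_def
    by (meson finite_Pow_iff finite_subset)
  show "\<And>v. finite (Ev E v)" using fE unfolding Ev_def by simp
qed

lemma m_tau_bound:
  assumes tls: "two_layer_system s k K V E T" and wpos: "\<forall>\<sigma>\<in>T. w \<sigma> > 0"
    and tE: "\<tau> \<in> Ev E v"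
  shows "link_m E T w v \<tau> \<le> (real s - 1) * wE T w \<tau>"
proof -
  note fin = tls_finite[OF tls]
  have TE: "\<And>\<sigma>. \<sigma> \<in> T \<Longrightarrow> \<sigma> \<subseteq> E" using tls unfolding two_layer_system_def by blast
  have "link_m E T w v \<tau> = (\<Sum>\<tau>'\<in>Ev E v. if link_adj E T v \<tau> \<tau>' then link_edge_w T w \<tau> \<tau>' else 0)"
    unfolding link_m_def by (rule sum.inter_filter) (rule fin(4))
  also have "\<dots> = (\<Sum>\<tau>'\<in>Ev E v. \<Sum>\<sigma>\<in>{\<sigma>\<in>T. \<tau>\<in>\<sigma> \<and> \<tau>'\<in>\<sigma> \<and> \<tau>'\<noteq>\<tau>}. w \<sigma>)"
  proof (rule sum.cong)
    fix \<tau>' assume t': "\<tau>' \<in> Ev E v"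
    show "(if link_adj E T v \<tau> \<tau>' then link_edge_w T w \<tau> \<tau>' else 0) =
      (\<Sum>\<sigma>\<in>{\<sigma>\<in>T. \<tau>\<in>\<sigma> \<and> \<tau>'\<in>\<sigma> \<and> \<tau>'\<noteq>\<tau>}. w \<sigma>)"
    proof (cases "link_adj E T v \<tau> \<tau>'")
      case True
      then have "\<tau>' \<noteq> \<tau>" unfolding link_adj_def by blast
      then show ?thesis using True unfolding link_edge_w_def by simp
    next
      case False
      then have e: "{\<sigma>\<in>T. \<tau>\<in>\<sigma> \<and> \<tau>'\<in>\<sigma> \<and> \<tau>'\<noteq>\<tau>} = {}" using t' tE unfolding link_adj_def by blast
      show ?thesis unfolding e if_not_P[OF False] by simp
    qed
  qed simp
  also have "\<dots> = (\<Sum>\<sigma>\<in>T. \<Sum>\<tau>'\<in>{\<tau>'\<in>Ev E v. \<tau>\<in>\<sigma> \<and> \<tau>'\<in>\<sigma> \<and> \<tau>'\<noteq>\<tau>}. w \<sigma>)"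
    using sum.swap_restrict[of "Ev E v" T "\<lambda>_ \<sigma>. w \<sigma>" "\<lambda>\<tau>' \<sigma>. \<tau>\<in>\<sigma> \<and> \<tau>'\<in>\<sigma> \<and> \<tau>'\<noteq>\<tau>"] fin
    by simp
  also have "\<dots> = (\<Sum>\<sigma>\<in>T. real (card {\<tau>'\<in>Ev E v. \<tau>\<in>\<sigma> \<and> \<tau>'\<in>\<sigma> \<and> \<tau>'\<noteq>\<tau>}) * w \<sigma>)"
    by simp
  also have "\<dots> \<le> (\<Sum>\<sigma>\<in>T. (real s - 1) * (if \<tau> \<in> \<sigma> then w \<sigma> else 0))"
  proof (rule sum_mono)
    fix \<sigma> assume sT: "\<sigma> \<in> T"
    show "real (card {\<tau>'\<in>Ev E v. \<tau>\<in>\<sigma> \<and> \<tau>'\<in>\<sigma> \<and> \<tau>'\<noteq>\<tau>}) * w \<sigma> \<le> (real s - 1) * (if \<tau> \<in> \<sigma> then w \<sigma> else 0)"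
    proof (cases "\<tau> \<in> \<sigma>")
      case True
      have vt: "v \<in> \<tau>" using tE unfolding Ev_def by simp
      have vin: "vin v \<sigma>" using True vt unfolding vin_def by blast
      define C where "C = {\<tau>'\<in>\<sigma>. v \<in> \<tau>'}"
      have c: "2 \<le> card C" "card C \<le> s" using tls sT vin unfolding two_layer_system_def C_def by auto
      have fC: "finite C" using c(1) card.infinite by fastforce
      have eq: "{\<tau>'\<in>Ev E v. \<tau>\<in>\<sigma> \<and> \<tau>'\<in>\<sigma> \<and> \<tau>'\<noteq>\<tau>} = C - {\<tau>}"
        using TE[OF sT] True unfolding C_def Ev_def by auto
      have tC: "\<tau> \<in> C" using True vt unfolding C_def by simp
      have "card (C - {\<tau>}) = card C - 1" using fC tC by simp
      then have "real (card (C - {\<tau>})) = real (card C) - 1" using c by simp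
      also have "\<dots> \<le> real s - 1" using c by simp
      finally have "real (card (C - {\<tau>})) * w \<sigma> \<le> (real s - 1) * w \<sigma>"
        using wpos sT by (intro mult_right_mono) auto
      then show ?thesis using eq True by simp
    next
      case False
      then show ?thesis by simp
    qed
  qed
  also have "\<dots> = (real s - 1) * wE T w \<tau>"
    unfolding wE_def sum_distrib_left[symmetric] using sum.inter_filter[OF fin(3), of w "\<lambda>\<sigma>. \<tau> \<in> \<sigma>"]
    by simp
  finally show ?thesis .
qed

lemma per_vertex:
  assumes tls: "two_layer_system s k K V E T" and wpos: "\<forall>\<sigma>\<in>T. w \<sigma> > 0"
    and lam: "lam \<ge> 0" and exp: "link_expander E T w v lam"
    and mu: "0 < \<mu>" "\<mu> < 1"
    and small: "link_mset E T w v (A \<inter> Ev E v) / link_mset E T w v (Ev E v) < \<mu>"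
  shows "link_mpair E T w v (A \<inter> Ev E v) (A \<inter> Ev E v) \<le> (lam + \<mu>) * link_mset E T w v (A \<inter> Ev E v)"
proof -
  define B where "B = A \<inter> Ev E v"
  define EV where "EV = Ev E v"
  have fEV: "finite EV" using tls_finite[OF tls] EV_def by simp
  have BE: "B \<subseteq> EV" unfolding B_def EV_def by auto
  have fB: "finite B" using fEV BE finite_subset by blast
  have split: "link_mpair E T w v B B + link_mpair E T w v B (EV - B) = link_mset E T w v B"
    using m_split[OF BE[unfolded EV_def]] fEV EV_def by simp
  have n1: "link_mpair E T w v B B \<ge> 0" "link_mpair E T w v B (EV - B) \<ge> 0"
    "link_mset E T w v B \<ge> 0" "link_mset E T w v (EV - B) \<ge> 0"
    using wpos by (simp_all add: mpair_nonneg mset_nonneg)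
  have msum: "link_mset E T w v EV = link_mset E T w v B + link_mset E T w v (EV - B)"
    unfolding link_mset_def using sum.subset_diff[OF BE fEV, of "link_m E T w v"] by simp
  have small': "link_mset E T w v B / link_mset E T w v EV < \<mu>" using small B_def EV_def by simp
  have "link_mpair E T w v B B \<le> (lam + \<mu>) * link_mset E T w v B"
  proof (cases "B = {}")
    case True then show ?thesis unfolding link_mpair_def link_mset_def by simp
  next
    case nB: False
    show ?thesis
    proof (cases "B = EV")
      case True
      have "link_mset E T w v B = 0"
      proof (rule ccontr)
        assume "link_mset E T w v B \<noteq> 0"
        then have "link_mset E T w v B / link_mset E T w v EV = 1" using True by simp
        then show False using small' mu by simp
      qed
      then show ?thesis using split n1 by simp
    next
      case False
      define f where "f = (\<lambda>U'. link_mpair E T w v U' (Ev E v - U') * link_mset E T w v (Ev E v)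
        / (link_mset E T w v U' * link_mset E T w v (Ev E v - U')))"
      have Bin: "B \<in> {U'. U' \<noteq> {} \<and> U' \<subset> Ev E v}" using nB False BE unfolding EV_def by blast
      have "{U'. U' \<noteq> {} \<and> U' \<subset> Ev E v} \<subseteq> Pow (Ev E v)" by blast
      then have fin: "finite {U'. U' \<noteq> {} \<and> U' \<subset> Ev E v}"
        using fEV unfolding EV_def by (meson finite_Pow_iff finite_subset)
      have hd: "link_h E T w v = Min (f ` {U'. U' \<noteq> {} \<and> U' \<subset> Ev E v})" unfolding link_h_def f_def ..
      have "link_h E T w v \<le> f B" unfolding hd
        by (rule Min_le[OF finite_imageI[OF fin] imageI[OF Bin]])
      then have q: "1 - f B \<le> lam" using exp unfolding link_expander_def by simp
      have fB': "f B = link_mpair E T w v B (EV - B) * (link_mset E T w v B + link_mset E T w v (EV - B))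
         / (link_mset E T w v B * link_mset E T w v (EV - B))"
        unfolding f_def EV_def[symmetric] msum ..
      have sm: "link_mset E T w v B / (link_mset E T w v B + link_mset E T w v (EV - B)) < \<mu>"
        using small' unfolding msum .
      show ?thesis
        by (rule key_real[OF n1(3,4,1,2) split sm q fB' lam mu(1)])
    qed
  qed
  then show ?thesis unfolding B_def .
qed

theorem lemma4p10:
  fixes s k K :: nat and V :: "'a set" and E :: "'a set set" and T :: "'a set set set"
    and w :: "'a set set \<Rightarrow> real" and lam \<mu> :: real and A :: "'a set set" and U :: "'a set"
  assumes "two_layer_system s k K V E T"
    and "\<forall>\<sigma>\<in>T. w \<sigma> > 0"
    and "lam \<ge> 0"
    and "\<forall>v\<in>V. link_expander E T w v lam"
    and "A \<subseteq> E" and "A \<noteq> {}"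
    and "0 < \<mu>" and "\<mu> < 1"
    and "U \<subseteq> small_vertices V E T w \<mu> A"
  shows "(real s - 1) * (lam + \<mu>) * (\<Sum>i=1..k. real i * wEset T w (Alayer A U i))
           \<ge> (\<Sum>v\<in>U. link_mpair E T w v (A \<inter> Ev E v) (A \<inter> Ev E v))"
proof -
  note tls = assms(1) and wpos = assms(2)
  note fin = tls_finite[OF tls]
  have UV: "U \<subseteq> V" using assms(9) unfolding small_vertices_def by blast
  have fU: "finite U" using UV fin(1) finite_subset by blast
  have fA: "finite A" using assms(5) fin(2) finite_subset by blast
  have pv: "link_mpair E T w v (A \<inter> Ev E v) (A \<inter> Ev E v) \<le>
      (real s - 1) * (lam + \<mu>) * (\<Sum>\<tau>\<in>A \<inter> Ev E v. wE T w \<tau>)" if vU: "v \<in> U" for v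
  proof -
    have vV: "v \<in> V" using vU UV by blast
    have sm: "link_mset E T w v (A \<inter> Ev E v) / link_mset E T w v (Ev E v) < \<mu>"
      using vU assms(9) unfolding small_vertices_def by blast
    have a: "link_mpair E T w v (A \<inter> Ev E v) (A \<inter> Ev E v) \<le> (lam + \<mu>) * link_mset E T w v (A \<inter> Ev E v)"
      by (rule per_vertex[OF tls wpos assms(3) _ assms(7,8) sm]) (use assms(4) vV in blast)
    have "link_mset E T w v (A \<inter> Ev E v) \<le> (\<Sum>\<tau>\<in>A \<inter> Ev E v. (real s - 1) * wE T w \<tau>)"
      unfolding link_mset_def by (rule sum_mono) (rule m_tau_bound[OF tls wpos], blast)
    also have "\<dots> = (real s - 1) * (\<Sum>\<tau>\<in>A \<inter> Ev E v. wE T w \<tau>)" by (simp add: sum_distrib_left)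
    finally have b: "link_mset E T w v (A \<inter> Ev E v) \<le> (real s - 1) * (\<Sum>\<tau>\<in>A \<inter> Ev E v. wE T w \<tau>)" .
    have "(lam + \<mu>) * link_mset E T w v (A \<inter> Ev E v) \<le> (lam + \<mu>) * ((real s - 1) * (\<Sum>\<tau>\<in>A \<inter> Ev E v. wE T w \<tau>))"
      by (rule mult_left_mono[OF b]) (use assms(3,7) in simp)
    also have "(lam + \<mu>) * ((real s - 1) * (\<Sum>\<tau>\<in>A \<inter> Ev E v. wE T w \<tau>)) = (real s - 1) * (lam + \<mu>) * (\<Sum>\<tau>\<in>A \<inter> Ev E v. wE T w \<tau>)"
      by (simp only: mult_ac)
    finally show ?thesis using a by linarith
  qed
  have "(\<Sum>v\<in>U. link_mpair E T w v (A \<inter> Ev E v) (A \<inter> Ev E v)) \<le>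
      (\<Sum>v\<in>U. (real s - 1) * (lam + \<mu>) * (\<Sum>\<tau>\<in>A \<inter> Ev E v. wE T w \<tau>))"
    by (rule sum_mono) (rule pv)
  also have "\<dots> = (real s - 1) * (lam + \<mu>) * (\<Sum>v\<in>U. \<Sum>\<tau>\<in>A \<inter> Ev E v. wE T w \<tau>)"
    by (simp add: sum_distrib_left)
  also have "(\<Sum>v\<in>U. \<Sum>\<tau>\<in>A \<inter> Ev E v. wE T w \<tau>) = (\<Sum>i=1..k. real i * wEset T w (Alayer A U i))"
  proof -
    have e1: "\<And>v. A \<inter> Ev E v = {\<tau>\<in>A. v \<in> \<tau>}" using assms(5) unfolding Ev_def by blast
    have "(\<Sum>v\<in>U. \<Sum>\<tau>\<in>A \<inter> Ev E v. wE T w \<tau>) = (\<Sum>v\<in>U. \<Sum>\<tau>\<in>{\<tau>\<in>A. v \<in> \<tau>}. wE T w \<tau>)"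
      unfolding e1 ..
    also have "\<dots> = (\<Sum>\<tau>\<in>A. \<Sum>v\<in>{v\<in>U. v \<in> \<tau>}. wE T w \<tau>)"
      using sum.swap_restrict[OF fU fA, of "\<lambda>_ \<tau>. wE T w \<tau>" "\<lambda>v \<tau>. v \<in> \<tau>"] by simp
    also have "\<dots> = (\<Sum>\<tau>\<in>A. real (card (U \<inter> \<tau>)) * wE T w \<tau>)"
    proof (rule sum.cong)
      fix \<tau> assume "\<tau> \<in> A"
      have "{v\<in>U. v \<in> \<tau>} = U \<inter> \<tau>" by blast
      then show "(\<Sum>v\<in>{v\<in>U. v \<in> \<tau>}. wE T w \<tau>) = real (card (U \<inter> \<tau>)) * wE T w \<tau>" by simp
    qed simp
    also have "\<dots> = (\<Sum>i\<in>{0..k}. \<Sum>\<tau>\<in>{\<tau>. \<tau> \<in> A \<and> card (U \<inter> \<tau>) = i}. real (card (U \<inter> \<tau>)) * wE T w \<tau>)"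
    proof (rule sum.group[symmetric, OF fA])
      show "finite {0..k}" by simp
      show "(\<lambda>\<tau>. card (U \<inter> \<tau>)) ` A \<subseteq> {0..k}"
      proof
        fix i assume "i \<in> (\<lambda>\<tau>. card (U \<inter> \<tau>)) ` A"
        then obtain \<tau> where t: "\<tau> \<in> A" "i = card (U \<inter> \<tau>)" by blast
        have tE: "\<tau> \<in> E" using t assms(5) by blast
        have ck: "card \<tau> = k" using tls tE unfolding two_layer_system_def by blast
        have "\<tau> \<subseteq> V" using tls tE unfolding two_layer_system_def by blast
        then have "finite \<tau>" using fin(1) finite_subset by blast
        then have "card (U \<inter> \<tau>) \<le> card \<tau>" by (intro card_mono) auto
        then show "i \<in> {0..k}" using t ck by simp
      qed
    qed
    also have "\<dots> = (\<Sum>i\<in>{0..k}. real i * wEset T w (Alayer A U i))"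
    proof (rule sum.cong)
      fix i
      have "(\<Sum>\<tau>\<in>{\<tau>. \<tau> \<in> A \<and> card (U \<inter> \<tau>) = i}. real (card (U \<inter> \<tau>)) * wE T w \<tau>)
          = (\<Sum>\<tau>\<in>Alayer A U i. real i * wE T w \<tau>)"
        unfolding Alayer_def by (rule sum.cong) auto
      then show "(\<Sum>\<tau>\<in>{\<tau>. \<tau> \<in> A \<and> card (U \<inter> \<tau>) = i}. real (card (U \<inter> \<tau>)) * wE T w \<tau>)
          = real i * wEset T w (Alayer A U i)"
        unfolding wEset_def by (simp add: sum_distrib_left)
    qed simp
    also have "\<dots> = (\<Sum>i=1..k. real i * wEset T w (Alayer A U i))"
      by (simp add: sum.atLeast_Suc_atMost)
    finally show ?thesis .
  qed
  finally show ?thesis by simp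
qed

end
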